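(* Let $A$ be a real $n\times n$ matrix acting on $H=\mathbb{R}^n$ (Euclidean inner product $\langle\cdot,\cdot\rangle$, norm $\|\cdot\|$) and let $\lambda$ be a real eigenvalue of $A$. Let $I\subset\mathbb{R}$ be an interval containing $0$ and let $\alpha,\beta:I\to\mathbb{R}$ be continuous, differentiable at $0$, and $u:I\to H$ continuous at $0$ with $\|u(t)\|=1$, such that for every $t\in I$, $$Au(t)=\alpha(t)u(t)^+-\beta(t)u(t)^-,$$ $\alpha(t)\neq\beta(t)$ for $t\neq 0$, $(\alpha(0),\beta(0))=(\lambda,\lambda)$ and $u(0)=u_0$. Then necessarily $u_0\in\operatorname{Ker}(A-\lambda I)$, $u_0\neq 0$, and $$\alpha'(0)\,\langle u_0^+,v\rangle=\beta'(0)\,\langle u_0^-,v\rangle\quad\text{for all } v\in\operatorname{Ker}(A^*-\lambda I).$$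
   Context: $A^*$ is the transpose of $A$. For $u\in\mathbb{R}^n$, $u^+$ and $u^-$ are defined componentwise by $u_i^+=\max\{u_i,0\}$, $u_i^-=\max\{-u_i,0\}$, so $u=u^+-u^-$. A pair $(\alpha,\beta)$ for which $Au=\alpha u^+-\beta u^-$ has a nontrivial solution belongs to the Fučík spectrum of $A$; $(\alpha(t),\beta(t))$ is a (continuous) Fučík curve with Fučík eigenvectors $u(t)$. *)

theory Defs
  imports "HOL-Analysis.Analysis"
begin

definition pos_part :: "real ^ 'n \<Rightarrow> real ^ 'n" where
  "pos_part u = (\<chi> i. max (u $ i) 0)"

definition neg_part :: "real ^ 'n \<Rightarrow> real ^ 'n" where
  "neg_part u = (\<chi> i. max (- (u $ i)) 0)"

end

theory Submission
  imports Defs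
begin

lemma pos_tend:
  assumes "(u \<longlongrightarrow> u0) F"
  shows "((\<lambda>t. pos_part (u t) \<bullet> v) \<longlongrightarrow> pos_part u0 \<bullet> v) F"
    "((\<lambda>t. neg_part (u t) \<bullet> v) \<longlongrightarrow> neg_part u0 \<bullet> v) F"
proof -
  have c: "\<And>i. ((\<lambda>t. u t $ i) \<longlongrightarrow> u0 $ i) F" using assms by (rule tendsto_vec_nth)
  show "((\<lambda>t. pos_part (u t) \<bullet> v) \<longlongrightarrow> pos_part u0 \<bullet> v) F"
    unfolding pos_part_def inner_vec_def
    by (auto intro!: tendsto_intros c)
  show "((\<lambda>t. neg_part (u t) \<bullet> v) \<longlongrightarrow> neg_part u0 \<bullet> v) F"
    unfolding neg_part_def inner_vec_def
    by (auto intro!: tendsto_intros c)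
qed

lemma decomp: "pos_part x - neg_part x = (x :: real ^ 'n)"
  unfolding pos_part_def neg_part_def by (simp add: vec_eq_iff max_def)

theorem theorem2:
  fixes A :: "real ^ 'n ^ 'n" and lam :: real and I :: "real set"
    and \<alpha> \<beta> :: "real \<Rightarrow> real" and u :: "real \<Rightarrow> real ^ 'n"
    and u0 :: "real ^ 'n" and \<alpha>' \<beta>' :: real
  assumes eig: "\<exists>x. x \<noteq> 0 \<and> A *v x = lam *\<^sub>R x"
    and I: "is_interval I" "0 \<in> I" "\<exists>t\<in>I. t \<noteq> 0"
    and cont: "continuous_on I \<alpha>" "continuous_on I \<beta>"
    and der: "(\<alpha> has_real_derivative \<alpha>') (at 0 within I)"
             "(\<beta> has_real_derivative \<beta>') (at 0 within I)"
    and ucont: "continuous (at 0 within I) u"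
    and unorm: "\<And>t. t \<in> I \<Longrightarrow> norm (u t) = 1"
    and fucik: "\<And>t. t \<in> I \<Longrightarrow>
                  A *v u t = \<alpha> t *\<^sub>R pos_part (u t) - \<beta> t *\<^sub>R neg_part (u t)"
    and neq: "\<And>t. t \<in> I \<Longrightarrow> t \<noteq> 0 \<Longrightarrow> \<alpha> t \<noteq> \<beta> t"
    and at0: "\<alpha> 0 = lam" "\<beta> 0 = lam" "u 0 = u0"
  shows "A *v u0 = lam *\<^sub>R u0 \<and> u0 \<noteq> 0 \<and>
         (\<forall>v. transpose A *v v = lam *\<^sub>R v \<longrightarrow>
              \<alpha>' * (pos_part u0 \<bullet> v) = \<beta>' * (neg_part u0 \<bullet> v))"
proof (intro conjI allI impI)
  show "A *v u0 = lam *\<^sub>R u0"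
    using fucik[OF I(2)] at0 decomp[of u0] by (simp add: scaleR_diff_right[symmetric])
  show "u0 \<noteq> 0" using unorm[OF I(2)] at0 by auto
  fix v assume v: "transpose A *v v = lam *\<^sub>R v"
  obtain t0 where t0: "t0 \<in> I" "t0 \<noteq> 0" using I(3) by auto
  have lp: "0 islimpt I"
  proof (rule islimpt_approachable[THEN iffD2], intro allI impI)
    fix e :: real assume e: "e > 0"
    define s where "s = t0 * min 1 (e / (2 * \<bar>t0\<bar>))"
    have m: "0 < min 1 (e / (2 * \<bar>t0\<bar>))" "min 1 (e / (2 * \<bar>t0\<bar>)) \<le> 1"
      using e t0 by auto
    have "s \<in> I"
    proof (cases "t0 > 0")
      case True
      have "0 \<le> s" "s \<le> t0" unfolding s_def using True m
        by (auto simp: mult_left_le)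
      then show ?thesis using I(1,2) t0 unfolding is_interval_1 by blast
    next
      case False
      have "t0 \<le> s" "s \<le> 0" unfolding s_def using False m t0
        by (auto simp: mult_le_0_iff)
      then show ?thesis using I(1,2) t0 unfolding is_interval_1 by blast
    qed
    moreover have "s \<noteq> 0" using m t0 unfolding s_def by auto
    moreover have "dist s 0 < e"
    proof -
      have "\<bar>s\<bar> = \<bar>t0\<bar> * min 1 (e / (2 * \<bar>t0\<bar>))" unfolding s_def using m by (simp add: abs_mult)
      also have "\<dots> \<le> \<bar>t0\<bar> * (e / (2 * \<bar>t0\<bar>))" by (intro mult_left_mono) auto
      also have "\<dots> = e / 2" using t0 by auto
      finally show ?thesis using e by auto
    qed
    ultimately show "\<exists>x'\<in>I. x' \<noteq> 0 \<and> dist x' 0 < e" by blast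
  qed
  hence nt: "at 0 within I \<noteq> bot" by (simp add: trivial_limit_within)
  have ut: "(u \<longlongrightarrow> u0) (at 0 within I)" using ucont at0 by (simp add: continuous_within)
  have da: "((\<lambda>t. (\<alpha> t - lam) / t) \<longlongrightarrow> \<alpha>') (at 0 within I)"
    using der(1) at0 by (simp add: has_field_derivative_iff)
  have db: "((\<lambda>t. (\<beta> t - lam) / t) \<longlongrightarrow> \<beta>') (at 0 within I)"
    using der(2) at0 by (simp add: has_field_derivative_iff)
  define f where "f t = (\<alpha> t - lam) / t * (pos_part (u t) \<bullet> v) - (\<beta> t - lam) / t * (neg_part (u t) \<bullet> v)" for t
  have L: "(f \<longlongrightarrow> \<alpha>' * (pos_part u0 \<bullet> v) - \<beta>' * (neg_part u0 \<bullet> v)) (at 0 within I)"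
    unfolding f_def by (intro tendsto_intros da db pos_tend ut)
  have key: "f t = 0" if "t \<in> I" for t
  proof -
    have "(A *v u t) \<bullet> v = u t \<bullet> (transpose A *v v)"
      by (metis dot_lmul_matrix inner_commute transpose_transpose vector_transpose_matrix)
    also have "\<dots> = lam * (u t \<bullet> v)" using v by simp
    also have "u t \<bullet> v = pos_part (u t) \<bullet> v - neg_part (u t) \<bullet> v"
      using decomp[of "u t"] by (metis inner_diff_left)
    finally have "\<alpha> t * (pos_part (u t) \<bullet> v) - \<beta> t * (neg_part (u t) \<bullet> v)
        = lam * (pos_part (u t) \<bullet> v - neg_part (u t) \<bullet> v)"
      using fucik[OF that] by (simp add: inner_diff_left)
    then have "(\<alpha> t - lam) * (pos_part (u t) \<bullet> v) - (\<beta> t - lam) * (neg_part (u t) \<bullet> v) = 0"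
      by (simp add: algebra_simps)
    then have "((\<alpha> t - lam) * (pos_part (u t) \<bullet> v) - (\<beta> t - lam) * (neg_part (u t) \<bullet> v)) / t = 0" by simp
    moreover have "f t = ((\<alpha> t - lam) * (pos_part (u t) \<bullet> v) - (\<beta> t - lam) * (neg_part (u t) \<bullet> v)) / t"
      unfolding f_def by (cases "t = 0") (simp_all add: field_simps)
    ultimately show ?thesis by simp
  qed
  have "(f \<longlongrightarrow> 0) (at 0 within I)"
    by (rule Lim_transform_within[OF tendsto_const[of 0], of 1]) (auto simp: key)
  from tendsto_unique[OF nt L this] show "\<alpha>' * (pos_part u0 \<bullet> v) = \<beta>' * (neg_part u0 \<bullet> v)" by simp
qed

end
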